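(* Let $\mathcal{X}$ and $\mathcal{Y}$ be Banach spaces, let $\mathcal{G}, \widetilde{\mathcal{G}}_w \in C^1(\mathcal{X};\mathcal{Y})$, and let $F:\mathcal{Y}\times\mathcal{X}\to\mathbb{R}$ be continuously (Fréchet) differentiable with a Lipschitz continuous derivative. Define $f(a) := F(\mathcal{G}(a),a)$ and $\widetilde{f}_w(a) := F(\widetilde{\mathcal{G}}_w(a),a)$. Let $a^\dagger\in\mathcal{X}$ be a stationary point of $\widetilde{f}_w$, i.e. $D\widetilde{f}_w(a^\dagger)=0$. Then $$\|Df(a^\dagger)\|_{\mathcal{X}'} \le \mathscr{C}\left(\|\mathcal{G}(a^\dagger)\|_{\mathcal{Y}} + \|D\mathcal{G}(a^\dagger)\|_{\mathscr{L}(\mathcal{X},\mathcal{Y})} + \|a^\dagger\|_{\mathcal{X}} + 1\right)\left(\mathscr{E}_0(a^\dagger)+\mathscr{E}_1(a^\dagger)+\mathscr{E}_0(a^\dagger)\mathscr{E}_1(a^\dagger)\right),$$ where $\mathscr{C}>0$ is a constant depending only on $F$, $\mathscr{E}_0(a):=\|\mathcal{G}(a)-\widetilde{\mathcal{G}}_w(a)\|_{\mathcal{Y}}$ and $\mathscr{E}_1(a):=\|D\mathcal{G}(a)-D\widetilde{\mathcal{G}}_w(a)\|_{\mathscr{L}(\mathcal{X},\mathcal{Y})}$.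
   Context: $\mathcal{X}'$ denotes the topological dual of $\mathcal{X}$; $\mathscr{L}(\mathcal{X},\mathcal{Y})$ is the space of bounded linear operators with the operator norm; $D$ denotes the Fréchet derivative. *)

theory Defs
  imports "HOL-Analysis.Analysis"
begin

definition C1_with_deriv :: "('a::real_normed_vector \<Rightarrow> 'b::real_normed_vector) \<Rightarrow> ('a \<Rightarrow> ('a \<Rightarrow>\<^sub>L 'b)) \<Rightarrow> bool" where
  "C1_with_deriv f f' \<longleftrightarrow> (\<forall>x. (f has_derivative blinfun_apply (f' x)) (at x)) \<and> continuous_on UNIV f'"

end

theory Submission
  imports Defs
begin

lemma chain_der:
  fixes F :: "'y::real_normed_vector \<times> 'x::real_normed_vector \<Rightarrow> real"
  assumes "C1_with_deriv F F'" "C1_with_deriv G G'"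
  shows "((\<lambda>b. F (G b, b)) has_derivative (\<lambda>h. F' (G a, a) (G' a h, h))) (at a)"
proof -
  have g: "(G has_derivative blinfun_apply (G' a)) (at a)" using assms(2) unfolding C1_with_deriv_def by blast
  have p: "((\<lambda>b. (G b, b)) has_derivative (\<lambda>h. (G' a h, h))) (at a)"
    by (rule has_derivative_Pair[OF g has_derivative_ident])
  have f: "(F has_derivative blinfun_apply (F' (G a, a))) (at (G a, a))" using assms(1) unfolding C1_with_deriv_def by blast
  show ?thesis using has_derivative_compose[OF p f] by (simp add: o_def)
qed

theorem proposition1:
  fixes F :: "'y::banach \<times> 'x::banach \<Rightarrow> real"
    and F' :: "'y \<times> 'x \<Rightarrow> (('y \<times> 'x) \<Rightarrow>\<^sub>L real)"
  assumes F_C1: "C1_with_deriv F F'"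
    and F'_lip: "\<exists>L. L-lipschitz_on UNIV F'"
  shows "\<exists>C>0. \<forall>(G :: 'x \<Rightarrow> 'y) G' Gt Gt' (a :: 'x) (Df :: 'x \<Rightarrow>\<^sub>L real).
     C1_with_deriv G G' \<longrightarrow> C1_with_deriv Gt Gt' \<longrightarrow>
     ((\<lambda>b. F (Gt b, b)) has_derivative (\<lambda>h. 0)) (at a) \<longrightarrow>
     ((\<lambda>b. F (G b, b)) has_derivative blinfun_apply Df) (at a) \<longrightarrow>
     norm Df \<le> C * (norm (G a) + norm (G' a) + norm a + 1) *
        (norm (G a - Gt a) + norm (G' a - Gt' a) + norm (G a - Gt a) * norm (G' a - Gt' a))"
proof -
  obtain L where lip: "L-lipschitz_on UNIV F'" using F'_lip by blast
  have L0: "0 \<le> L" using lipschitz_on_nonneg[OF lip] .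
  define n0 where "n0 = norm (F' (0, 0))"
  define K where "K = L + n0 + 1"
  have n00: "0 \<le> n0" unfolding n0_def by simp
  have K0: "K > 0" unfolding K_def using L0 n00 by simp
  show ?thesis
  proof (intro exI[of _ K] conjI K0 allI impI)
    fix G :: "'x \<Rightarrow> 'y" and G' Gt Gt' a and Df :: "'x \<Rightarrow>\<^sub>L real"
    assume hG: "C1_with_deriv G G'" and hGt: "C1_with_deriv Gt Gt'"
      and st: "((\<lambda>b. F (Gt b, b)) has_derivative (\<lambda>h. 0)) (at a)"
      and dF: "((\<lambda>b. F (G b, b)) has_derivative blinfun_apply Df) (at a)"
    define A where "A = F' (G a, a)"
    define B where "B = F' (Gt a, a)"
    define E0 where "E0 = norm (G a - Gt a)"
    define E1 where "E1 = norm (G' a - Gt' a)"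
    define g where "g = norm (G a)"
    define g' where "g' = norm (G' a)"
    define al where "al = norm a"
    have Dfeq: "blinfun_apply Df = (\<lambda>h. A (G' a h, h))"
      using has_derivative_unique[OF dF chain_der[OF F_C1 hG]] unfolding A_def .
    have Bz: "(\<lambda>h. 0) = (\<lambda>h. B (Gt' a h, h))"
      using has_derivative_unique[OF st chain_der[OF F_C1 hGt]] unfolding B_def .
    have AB: "norm (A - B) \<le> L * E0"
    proof -
      have "dist A B \<le> L * dist (G a, a) (Gt a, a)"
        unfolding A_def B_def by (rule lipschitz_onD[OF lip]) auto
      moreover have "dist (G a, a) (Gt a, a) = E0"
        unfolding E0_def dist_norm by (simp add: norm_Pair)
      ultimately show ?thesis by (simp add: dist_norm)
    qed
    have Bn: "norm B \<le> n0 + L * (g + E0 + al)"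
    proof -
      have "dist B (F' (0,0)) \<le> L * dist (Gt a, a) (0,0)"
        unfolding B_def by (rule lipschitz_onD[OF lip]) auto
      moreover have "dist (Gt a, a) (0,0) \<le> g + E0 + al"
      proof -
        have "dist (Gt a, a) (0,0) = norm (Gt a, a)" by (simp add: dist_norm)
        also have "\<dots> \<le> norm (Gt a) + norm a" by (rule norm_Pair_le)
        also have "norm (Gt a) \<le> g + E0" unfolding g_def E0_def
          using norm_triangle_ineq4[of "G a" "G a - Gt a"] by (simp add: norm_minus_commute)
        finally show ?thesis unfolding al_def by simp
      qed
      ultimately have "dist B (F' (0,0)) \<le> L * (g + E0 + al)"
        using L0 by (meson mult_left_mono order_trans)
      moreover have "norm B \<le> dist B (F' (0,0)) + n0"
        unfolding n0_def dist_norm using norm_triangle_ineq2[of B "F' (0,0)"] by simp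
      ultimately show ?thesis by simp
    qed
    have E00: "0 \<le> E0" and E10: "0 \<le> E1" and g0: "0 \<le> g" and g'0: "0 \<le> g'" and al0: "0 \<le> al"
      by (auto simp: E0_def E1_def g_def g'_def al_def)
    define M where "M = L * E0 * (g' + 1) + (n0 + L * (g + E0 + al)) * E1"
    have M0: "0 \<le> M" unfolding M_def using L0 n00 E00 E10 g0 g'0 al0 by simp
    have bound: "norm (Df h) \<le> M * norm h" for h
    proof -
      have eq: "Df h = (A - B) (G' a h, h) + B ((G' a - Gt' a) h, 0)"
      proof -
        have "B (Gt' a h, h) = 0" using fun_cong[OF Bz, of h] by simp
        moreover have "(A - B) (G' a h, h) + B ((G' a - Gt' a) h, 0)
            = A (G' a h, h) - B (Gt' a h, h)"
        proof -
          have "(G' a h, h) = (Gt' a h, h) + ((G' a - Gt' a) h, 0)"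
            by (simp add: blinfun.diff_left)
          hence "B (G' a h, h) = B (Gt' a h, h) + B ((G' a - Gt' a) h, 0)"
            by (metis blinfun.add_right)
          thus ?thesis by (simp add: blinfun.diff_left)
        qed
        ultimately show ?thesis using Dfeq by simp
      qed
      have t1: "norm ((A - B) (G' a h, h)) \<le> L * E0 * (g' + 1) * norm h"
      proof -
        have "norm ((A - B) (G' a h, h)) \<le> norm (A - B) * norm (G' a h, h)" by (rule norm_blinfun)
        also have "norm (G' a h, h) \<le> (g' + 1) * norm h"
        proof -
          have "norm (G' a h, h) \<le> norm (G' a h) + norm h" by (rule norm_Pair_le)
          also have "norm (G' a h) \<le> g' * norm h" unfolding g'_def by (rule norm_blinfun)
          finally show ?thesis by (simp add: algebra_simps)
        qed
        hence "norm (A - B) * norm (G' a h, h) \<le> L * E0 * ((g' + 1) * norm h)"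
          by (rule mult_mono[OF AB]) (use L0 E00 in auto)
        finally show ?thesis by (simp add: mult.assoc)
      qed
      have t2: "norm (B ((G' a - Gt' a) h, 0)) \<le> (n0 + L * (g + E0 + al)) * E1 * norm h"
      proof -
        have "norm (B ((G' a - Gt' a) h, 0)) \<le> norm B * norm ((G' a - Gt' a) h, 0::'x)" by (rule norm_blinfun)
        also have "norm ((G' a - Gt' a) h, 0) \<le> E1 * norm h"
          unfolding E1_def by (simp add: norm_Pair norm_blinfun)
        hence "norm B * norm ((G' a - Gt' a) h, 0) \<le> (n0 + L * (g + E0 + al)) * (E1 * norm h)"
          by (rule mult_mono[OF Bn]) (use L0 E00 g0 al0 n00 in auto)
        finally show ?thesis by (simp add: mult.assoc)
      qed
      have "norm (Df h) \<le> norm ((A - B) (G' a h, h)) + norm (B ((G' a - Gt' a) h, 0))"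
        unfolding eq by (rule norm_triangle_ineq)
      also have "\<dots> \<le> M * norm h" using t1 t2 unfolding M_def by (simp add: algebra_simps)
      finally show ?thesis .
    qed
    have nD: "norm Df \<le> M" by (rule norm_blinfun_bound[OF M0 bound])
    define S where "S = g + g' + al + 1"
    have S1: "1 \<le> S" unfolding S_def using g0 g'0 al0 by simp
    have "M = L * (g' + 1) * E0 + (n0 + L * (g + al)) * E1 + L * (E0 * E1)"
      unfolding M_def by (simp add: algebra_simps)
    also have "\<dots> \<le> K * S * E0 + K * S * E1 + K * S * (E0 * E1)"
    proof -
      have KS: "K \<le> K * S" using K0 S1 by simp
      have a1: "L * (g' + 1) \<le> K * S" unfolding K_def S_def using L0 n00 g0 g'0 al0
        by (simp add: algebra_simps mult_nonneg_nonneg)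
      have a2: "n0 + L * (g + al) \<le> K * S" unfolding K_def S_def using L0 n00 g0 g'0 al0
        by (simp add: algebra_simps mult_nonneg_nonneg)
      have a3: "L \<le> K * S" using KS unfolding K_def using n00 by simp
      have "L * (g' + 1) * E0 \<le> K * S * E0" using a1 E00 by (rule mult_right_mono)
      moreover have "(n0 + L * (g + al)) * E1 \<le> K * S * E1" using a2 E10 by (rule mult_right_mono)
      moreover have "L * (E0 * E1) \<le> K * S * (E0 * E1)" using a3 E00 E10 by (simp add: mult_right_mono)
      ultimately show ?thesis by simp
    qed
    also have "\<dots> = K * S * (E0 + E1 + E0 * E1)" by (simp add: algebra_simps)
    finally show "norm Df \<le> K * (norm (G a) + norm (G' a) + norm a + 1) *
        (norm (G a - Gt a) + norm (G' a - Gt' a) + norm (G a - Gt a) * norm (G' a - Gt' a))"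
      using nD unfolding S_def g_def g'_def al_def E0_def E1_def by simp
  qed
qed

end
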